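(* Let $\mathcal{F}=\{i_{\alpha\beta}:\alpha\le\beta<\lambda\}$ be a complete iteration system and let $A\subseteq T(\mathcal{F})$ be an antichain such that for some $\alpha<\lambda$ the set $\{f(\alpha):f\in A\}$ is an antichain in $\mathbb{B}_\alpha$ (with $f\mapsto f(\alpha)$ injective on $A$). Then the pointwise supremum $\tilde\bigvee A$ is the supremum of $A$ in ${\sf RO}(T(\mathcal{F}))$.
   Context: A complete iteration system of length $\lambda$ (a limit ordinal) is a family $\mathcal{F}=\{i_{\alpha\beta}:\mathbb{B}_\alpha\to\mathbb{B}_\beta:\alpha\le\beta<\lambda\}$ where each $\mathbb{B}_\alpha$ is a complete Boolean algebra, $i_{\alpha\alpha}$ is the identity, each $i_{\alpha\beta}$ is a regular embedding (injective complete homomorphism) with retraction $\pi_{\alpha\beta}(c)=\bigwedge\{b: i_{\alpha\beta}(b)\ge c\}$, and $i_{\beta\gamma}\circ i_{\alpha\beta}=i_{\alpha\gamma}$. $T(\mathcal{F})$ is the set of threads $f\in\prod_{\alpha<\lambda}\mathbb{B}_\alpha$ with $\pi_{\alpha\beta}(f(\beta))=f(\alpha)$ for all $\alpha\le\beta<\lambda$, ordered pointwise (as a forcing poset the zero thread is removed). For $A\subseteq T(\mathcal{F})$ the pointwise supremum $\tilde\bigvee A$ is the thread $\alpha\mapsto\bigvee\{f(\alpha):f\in A\}$. ${\sf RO}(P)$ denotes the Boolean completion of a poset $P$, into which $P$ embeds densely. *)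

theory Defs
  imports Main
begin

definition is_lub :: "('a \<Rightarrow> 'a \<Rightarrow> bool) \<Rightarrow> 'a set \<Rightarrow> 'a set \<Rightarrow> 'a \<Rightarrow> bool" where
  "is_lub le S X x \<longleftrightarrow> x \<in> S \<and> (\<forall>y\<in>X. le y x) \<and> (\<forall>z\<in>S. (\<forall>y\<in>X. le y z) \<longrightarrow> le x z)"

definition is_glb :: "('a \<Rightarrow> 'a \<Rightarrow> bool) \<Rightarrow> 'a set \<Rightarrow> 'a set \<Rightarrow> 'a \<Rightarrow> bool" where
  "is_glb le S X x \<longleftrightarrow> x \<in> S \<and> (\<forall>y\<in>X. le x y) \<and> (\<forall>z\<in>S. (\<forall>y\<in>X. le z y) \<longrightarrow> le z x)"

definition lub_in :: "('a \<Rightarrow> 'a \<Rightarrow> bool) \<Rightarrow> 'a set \<Rightarrow> 'a set \<Rightarrow> 'a" where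
  "lub_in le S X = (THE x. is_lub le S X x)"

definition glb_in :: "('a \<Rightarrow> 'a \<Rightarrow> bool) \<Rightarrow> 'a set \<Rightarrow> 'a set \<Rightarrow> 'a" where
  "glb_in le S X = (THE x. is_glb le S X x)"

definition partial_order_on' :: "'a set \<Rightarrow> ('a \<Rightarrow> 'a \<Rightarrow> bool) \<Rightarrow> bool" where
  "partial_order_on' S le \<longleftrightarrow>
     (\<forall>x\<in>S. le x x) \<and>
     (\<forall>x\<in>S. \<forall>y\<in>S. le x y \<and> le y x \<longrightarrow> x = y) \<and>
     (\<forall>x\<in>S. \<forall>y\<in>S. \<forall>z\<in>S. le x y \<and> le y z \<longrightarrow> le x z)"

definition cba :: "'a set \<Rightarrow> ('a \<Rightarrow> 'a \<Rightarrow> bool) \<Rightarrow> bool" where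
  "cba S le \<longleftrightarrow> partial_order_on' S le \<and>
     (\<forall>X\<subseteq>S. \<exists>x. is_lub le S X x) \<and>
     (\<forall>x\<in>S. \<forall>y\<in>S. \<forall>z\<in>S.
        glb_in le S {x, lub_in le S {y, z}} = lub_in le S {glb_in le S {x, y}, glb_in le S {x, z}}) \<and>
     (\<forall>x\<in>S. \<exists>y\<in>S. lub_in le S {x, y} = lub_in le S S \<and> glb_in le S {x, y} = lub_in le S {})"

definition regular_embedding ::
  "'a set \<Rightarrow> ('a \<Rightarrow> 'a \<Rightarrow> bool) \<Rightarrow> 'a set \<Rightarrow> ('a \<Rightarrow> 'a \<Rightarrow> bool) \<Rightarrow> ('a \<Rightarrow> 'a) \<Rightarrow> bool" where
  "regular_embedding S le S' le' i \<longleftrightarrow>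
     i ` S \<subseteq> S' \<and> inj_on i S \<and>
     (\<forall>X\<subseteq>S. i (lub_in le S X) = lub_in le' S' (i ` X)) \<and>
     (\<forall>x\<in>S. \<forall>y\<in>S. i (glb_in le S {x, y}) = glb_in le' S' {i x, i y}) \<and>
     i (lub_in le S S) = lub_in le' S' S'"

text \<open>The length lambda (a limit ordinal) is represented by a well-ordered index type 'i without
  greatest element. B alpha is the carrier of the algebra B_alpha, le alpha its order, and
  e alpha beta the embedding i_{alpha beta}.\<close>
definition complete_iteration_system ::
  "('i::wellorder \<Rightarrow> 'b set) \<Rightarrow> ('i \<Rightarrow> 'b \<Rightarrow> 'b \<Rightarrow> bool) \<Rightarrow> ('i \<Rightarrow> 'i \<Rightarrow> 'b \<Rightarrow> 'b) \<Rightarrow> bool" where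
  "complete_iteration_system B le e \<longleftrightarrow>
     (\<forall>a::'i. \<exists>b. a < b) \<and>
     (\<forall>a. cba (B a) (le a)) \<and>
     (\<forall>a. \<forall>x\<in>B a. e a a x = x) \<and>
     (\<forall>a b. a \<le> b \<longrightarrow> regular_embedding (B a) (le a) (B b) (le b) (e a b)) \<and>
     (\<forall>a b c. a \<le> b \<and> b \<le> c \<longrightarrow> (\<forall>x\<in>B a. e b c (e a b x) = e a c x))"

definition retraction ::
  "('i \<Rightarrow> 'b set) \<Rightarrow> ('i \<Rightarrow> 'b \<Rightarrow> 'b \<Rightarrow> bool) \<Rightarrow> ('i \<Rightarrow> 'i \<Rightarrow> 'b \<Rightarrow> 'b) \<Rightarrow> 'i \<Rightarrow> 'i \<Rightarrow> 'b \<Rightarrow> 'b" where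
  "retraction B le e a b c = glb_in (le a) (B a) {x \<in> B a. le b c (e a b x)}"

definition threads ::
  "('i::wellorder \<Rightarrow> 'b set) \<Rightarrow> ('i \<Rightarrow> 'b \<Rightarrow> 'b \<Rightarrow> bool) \<Rightarrow> ('i \<Rightarrow> 'i \<Rightarrow> 'b \<Rightarrow> 'b) \<Rightarrow> ('i \<Rightarrow> 'b) set" where
  "threads B le e = {f. (\<forall>a. f a \<in> B a) \<and> (\<forall>a b. a \<le> b \<longrightarrow> retraction B le e a b (f b) = f a)}"

definition bot_of :: "('i \<Rightarrow> 'b set) \<Rightarrow> ('i \<Rightarrow> 'b \<Rightarrow> 'b \<Rightarrow> bool) \<Rightarrow> 'i \<Rightarrow> 'b" where
  "bot_of B le a = lub_in (le a) (B a) {}"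

definition zero_thread :: "('i \<Rightarrow> 'b set) \<Rightarrow> ('i \<Rightarrow> 'b \<Rightarrow> 'b \<Rightarrow> bool) \<Rightarrow> 'i \<Rightarrow> 'b" where
  "zero_thread B le = (\<lambda>a. bot_of B le a)"

definition thread_le :: "('i \<Rightarrow> 'b \<Rightarrow> 'b \<Rightarrow> bool) \<Rightarrow> ('i \<Rightarrow> 'b) \<Rightarrow> ('i \<Rightarrow> 'b) \<Rightarrow> bool" where
  "thread_le le f g \<longleftrightarrow> (\<forall>a. le a (f a) (g a))"

definition thread_poset ::
  "('i::wellorder \<Rightarrow> 'b set) \<Rightarrow> ('i \<Rightarrow> 'b \<Rightarrow> 'b \<Rightarrow> bool) \<Rightarrow> ('i \<Rightarrow> 'i \<Rightarrow> 'b \<Rightarrow> 'b) \<Rightarrow> ('i \<Rightarrow> 'b) set" where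
  "thread_poset B le e = threads B le e - {zero_thread B le}"

definition pointwise_sup ::
  "('i \<Rightarrow> 'b set) \<Rightarrow> ('i \<Rightarrow> 'b \<Rightarrow> 'b \<Rightarrow> bool) \<Rightarrow> ('i \<Rightarrow> 'b) set \<Rightarrow> 'i \<Rightarrow> 'b" where
  "pointwise_sup B le A = (\<lambda>a. lub_in (le a) (B a) ((\<lambda>f. f a) ` A))"

definition ba_incompatible :: "('i \<Rightarrow> 'b set) \<Rightarrow> ('i \<Rightarrow> 'b \<Rightarrow> 'b \<Rightarrow> bool) \<Rightarrow> 'i \<Rightarrow> 'b \<Rightarrow> 'b \<Rightarrow> bool" where
  "ba_incompatible B le a x y \<longleftrightarrow> (\<forall>z\<in>B a. le a z x \<and> le a z y \<longrightarrow> z = bot_of B le a)"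

definition compatible :: "'p set \<Rightarrow> ('p \<Rightarrow> 'p \<Rightarrow> bool) \<Rightarrow> 'p \<Rightarrow> 'p \<Rightarrow> bool" where
  "compatible P r p q \<longleftrightarrow> (\<exists>s\<in>P. r s p \<and> r s q)"

definition antichain :: "'p set \<Rightarrow> ('p \<Rightarrow> 'p \<Rightarrow> bool) \<Rightarrow> 'p set \<Rightarrow> bool" where
  "antichain P r A \<longleftrightarrow> A \<subseteq> P \<and> (\<forall>p\<in>A. \<forall>q\<in>A. p \<noteq> q \<longrightarrow> \<not> compatible P r p q)"

text \<open>Regular open sets in the downward-closed-set topology on P; these form RO(P), ordered by inclusion.\<close>
definition regular_open :: "'p set \<Rightarrow> ('p \<Rightarrow> 'p \<Rightarrow> bool) \<Rightarrow> 'p set \<Rightarrow> bool" where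
  "regular_open P r U \<longleftrightarrow> U \<subseteq> P \<and>
     (\<forall>p\<in>U. \<forall>q\<in>P. r q p \<longrightarrow> q \<in> U) \<and>
     (\<forall>p\<in>P. (\<forall>q\<in>P. r q p \<longrightarrow> (\<exists>s\<in>U. r s q)) \<longrightarrow> p \<in> U)"

definition RO :: "'p set \<Rightarrow> ('p \<Rightarrow> 'p \<Rightarrow> bool) \<Rightarrow> 'p set set" where
  "RO P r = {U. regular_open P r U}"

text \<open>The dense embedding of P into RO(P): p maps to int(cl(down-set of p)).\<close>
definition ro_emb :: "'p set \<Rightarrow> ('p \<Rightarrow> 'p \<Rightarrow> bool) \<Rightarrow> 'p \<Rightarrow> 'p set" where
  "ro_emb P r p = {q\<in>P. \<forall>q'\<in>P. r q' q \<longrightarrow> compatible P r q' p}"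

end

theory Submission
  imports Defs
begin

locale CBA =
  fixes S :: "'a set" and le :: "'a \<Rightarrow> 'a \<Rightarrow> bool"
  assumes cba: "cba S le"
begin

abbreviation "meet x y \<equiv> glb_in le S {x, y}"
abbreviation "join x y \<equiv> lub_in le S {x, y}"
abbreviation "bt \<equiv> lub_in le S {}"
abbreviation "tp \<equiv> lub_in le S S"

lemma po: "partial_order_on' S le" using cba unfolding cba_def by (rule conjunct1)
lemma cba_lub: "\<forall>X\<subseteq>S. \<exists>x. is_lub le S X x" using cba unfolding cba_def by (elim conjE)
lemma cba_dist: "\<forall>x\<in>S. \<forall>y\<in>S. \<forall>z\<in>S.
        glb_in le S {x, lub_in le S {y, z}} = lub_in le S {glb_in le S {x, y}, glb_in le S {x, z}}"
  using cba unfolding cba_def by (elim conjE)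
lemma cba_compl: "\<forall>x\<in>S. \<exists>y\<in>S. lub_in le S {x, y} = lub_in le S S \<and> glb_in le S {x, y} = lub_in le S {}"
  using cba unfolding cba_def by (elim conjE)

lemma refl: "x \<in> S \<Longrightarrow> le x x"
  using po unfolding partial_order_on'_def by (elim conjE) (rule bspec)
lemma antisym: "x \<in> S \<Longrightarrow> y \<in> S \<Longrightarrow> le x y \<Longrightarrow> le y x \<Longrightarrow> x = y"
  using po unfolding partial_order_on'_def by (elim conjE) blast
lemma trans: "x \<in> S \<Longrightarrow> y \<in> S \<Longrightarrow> z \<in> S \<Longrightarrow> le x y \<Longrightarrow> le y z \<Longrightarrow> le x z"
  using po unfolding partial_order_on'_def by (elim conjE) blast

lemma lub_unique: "is_lub le S X x \<Longrightarrow> is_lub le S X y \<Longrightarrow> x = y"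
  unfolding is_lub_def using antisym by blast
lemma glb_unique: "is_glb le S X x \<Longrightarrow> is_glb le S X y \<Longrightarrow> x = y"
  unfolding is_glb_def using antisym by blast

lemma lub_is: assumes "X \<subseteq> S" shows "is_lub le S X (lub_in le S X)"
proof -
  obtain x where x: "is_lub le S X x" using cba_lub assms by blast
  show ?thesis unfolding lub_in_def by (rule theI[of _ x]) (use x lub_unique in blast)+
qed

lemma lub_eq: "is_lub le S X x \<Longrightarrow> lub_in le S X = x"
  unfolding lub_in_def using lub_unique by blast
lemma glb_eq: "is_glb le S X x \<Longrightarrow> glb_in le S X = x"
  unfolding glb_in_def using glb_unique by blast

lemma glb_is: assumes "X \<subseteq> S" shows "is_glb le S X (glb_in le S X)"
proof -
  let ?L = "{z\<in>S. \<forall>y\<in>X. le z y}"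
  have l: "is_lub le S ?L (lub_in le S ?L)" by (rule lub_is) auto
  have "is_glb le S X (lub_in le S ?L)"
    using l assms unfolding is_lub_def is_glb_def by blast
  then show ?thesis using glb_eq by simp
qed

lemma lub_S: "X \<subseteq> S \<Longrightarrow> lub_in le S X \<in> S" using lub_is[of X] unfolding is_lub_def by blast
lemma lub_upper: "X \<subseteq> S \<Longrightarrow> y \<in> X \<Longrightarrow> le y (lub_in le S X)" using lub_is[of X] unfolding is_lub_def by blast
lemma lub_least: "X \<subseteq> S \<Longrightarrow> z \<in> S \<Longrightarrow> (\<And>y. y \<in> X \<Longrightarrow> le y z) \<Longrightarrow> le (lub_in le S X) z"
  using lub_is[of X] unfolding is_lub_def by blast
lemma glb_S: "X \<subseteq> S \<Longrightarrow> glb_in le S X \<in> S" using glb_is[of X] unfolding is_glb_def by blast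
lemma glb_lower: "X \<subseteq> S \<Longrightarrow> y \<in> X \<Longrightarrow> le (glb_in le S X) y" using glb_is[of X] unfolding is_glb_def by blast
lemma glb_greatest: "X \<subseteq> S \<Longrightarrow> z \<in> S \<Longrightarrow> (\<And>y. y \<in> X \<Longrightarrow> le z y) \<Longrightarrow> le z (glb_in le S X)"
  using glb_is[of X] unfolding is_glb_def by blast

lemma meet_S: "x \<in> S \<Longrightarrow> y \<in> S \<Longrightarrow> meet x y \<in> S" by (rule glb_S) auto
lemma meet_l1: "x \<in> S \<Longrightarrow> y \<in> S \<Longrightarrow> le (meet x y) x" by (rule glb_lower) auto
lemma meet_l2: "x \<in> S \<Longrightarrow> y \<in> S \<Longrightarrow> le (meet x y) y" by (rule glb_lower) auto
lemma meet_gr: "x \<in> S \<Longrightarrow> y \<in> S \<Longrightarrow> z \<in> S \<Longrightarrow> le z x \<Longrightarrow> le z y \<Longrightarrow> le z (meet x y)"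
  by (rule glb_greatest) auto
lemma meet_comm: "meet x y = meet y x" by (simp add: insert_commute)
lemma join_comm: "join x y = join y x" by (simp add: insert_commute)
lemma join_S: "x \<in> S \<Longrightarrow> y \<in> S \<Longrightarrow> join x y \<in> S" by (rule lub_S) auto
lemma join_u1: "x \<in> S \<Longrightarrow> y \<in> S \<Longrightarrow> le x (join x y)" by (rule lub_upper) auto
lemma join_u2: "x \<in> S \<Longrightarrow> y \<in> S \<Longrightarrow> le y (join x y)" by (rule lub_upper) auto
lemma join_le: "x \<in> S \<Longrightarrow> y \<in> S \<Longrightarrow> z \<in> S \<Longrightarrow> le x z \<Longrightarrow> le y z \<Longrightarrow> le (join x y) z"
  by (rule lub_least) auto

lemma bot_S: "bt \<in> S" by (rule lub_S) auto
lemma bot_le: "x \<in> S \<Longrightarrow> le bt x" by (rule lub_least) auto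
lemma top_S: "tp \<in> S" by (rule lub_S) auto
lemma le_top: "x \<in> S \<Longrightarrow> le x tp" by (rule lub_upper) auto

lemma is_bot: "x \<in> S \<Longrightarrow> le x bt \<Longrightarrow> x = bt"
  using antisym bot_S bot_le by blast

lemma meet_eq: "x \<in> S \<Longrightarrow> y \<in> S \<Longrightarrow> le x y \<Longrightarrow> meet x y = x"
  by (rule antisym) (auto intro: meet_S meet_l1 meet_gr refl)

lemma meet_mono: "a \<in> S \<Longrightarrow> b \<in> S \<Longrightarrow> c \<in> S \<Longrightarrow> le a b \<Longrightarrow> le (meet a c) (meet b c)"
proof -
  assume h: "a \<in> S" "b \<in> S" "c \<in> S" "le a b"
  have m: "meet a c \<in> S" using meet_S h by blast
  have "le (meet a c) b" using trans[OF m h(1) h(2) meet_l1[OF h(1) h(3)] h(4)] .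
  then show ?thesis using meet_gr[OF h(2) h(3) m] meet_l2[OF h(1) h(3)] by blast
qed

lemma distrib: "x \<in> S \<Longrightarrow> y \<in> S \<Longrightarrow> z \<in> S \<Longrightarrow> meet x (join y z) = join (meet x y) (meet x z)"
  using cba_dist by blast

lemma compl: "x \<in> S \<Longrightarrow> \<exists>y\<in>S. join x y = tp \<and> meet x y = bt"
  using cba_compl by blast

lemma L1:
  assumes u: "u \<in> S" "u' \<in> S" "join u u' = tp" "meet u u' = bt" and c: "c \<in> S"
  shows "le c u \<longleftrightarrow> meet c u' = bt"
proof
  assume "le c u"
  then have "le (meet c u') (meet u u')" using meet_mono u c by blast
  then show "meet c u' = bt" using is_bot meet_S u c by simp
next
  assume h: "meet c u' = bt"
  have "c = meet c tp" using meet_eq le_top c top_S by simp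
  also have "\<dots> = join (meet c u) (meet c u')" using distrib[OF c u(1) u(2)] unfolding u(3) .
  finally have "c = join (meet c u) bt" using h by simp
  moreover have "le (join (meet c u) bt) u"
    using join_le meet_S bot_S meet_l2 bot_le u c by simp
  ultimately show "le c u" by simp
qed

lemma compl_sym: "join u u' = tp \<Longrightarrow> meet u u' = bt \<Longrightarrow> join u' u = tp \<and> meet u' u = bt"
  by (simp add: insert_commute)

lemma Zlem:
  assumes c: "c \<in> S" and W: "W \<subseteq> S" and h: "\<And>z. z \<in> W \<Longrightarrow> meet c z = bt"
  shows "meet c (lub_in le S W) = bt"
proof -
  obtain c' where c': "c' \<in> S" "join c c' = tp" "meet c c' = bt" using compl c by blast
  have cc: "join c' c = tp" "meet c' c = bt" using c' compl_sym by blast+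
  have "\<And>z. z \<in> W \<Longrightarrow> le z c'"
    using L1[OF c'(1) c cc] h W meet_comm by auto
  then have "le (lub_in le S W) c'" using lub_least W c' by blast
  then have "le (meet (lub_in le S W) c) (meet c' c)" using meet_mono lub_S W c' c by blast
  then have "le (meet c (lub_in le S W)) bt" using cc meet_comm by simp
  then show ?thesis using is_bot meet_S lub_S W c by blast
qed

end
definition pr :: "'a set \<Rightarrow> ('a \<Rightarrow> 'a \<Rightarrow> bool) \<Rightarrow> ('a \<Rightarrow> 'a \<Rightarrow> bool) \<Rightarrow> ('a \<Rightarrow> 'a) \<Rightarrow> 'a \<Rightarrow> 'a" where
  "pr S le le' i c = glb_in le S {x\<in>S. le' c (i x)}"

locale EMB = s: CBA S le + t: CBA S' le'
  for S :: "'a set" and le and S' :: "'a set" and le' +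
  fixes i :: "'a \<Rightarrow> 'a"
  assumes emb: "regular_embedding S le S' le' i"
begin

lemma i_S: "x \<in> S \<Longrightarrow> i x \<in> S'"
  using emb unfolding regular_embedding_def by blast
lemma i_meet: "x \<in> S \<Longrightarrow> y \<in> S \<Longrightarrow> i (s.meet x y) = t.meet (i x) (i y)"
  using emb unfolding regular_embedding_def by blast
lemma i_lub: "X \<subseteq> S \<Longrightarrow> i (lub_in le S X) = lub_in le' S' (i ` X)"
  using emb unfolding regular_embedding_def by blast
lemma i_bot: "i s.bt = t.bt" using i_lub[of "{}"] by simp
lemma i_top: "i s.tp = t.tp" using emb unfolding regular_embedding_def by blast
lemma i_join: "x \<in> S \<Longrightarrow> y \<in> S \<Longrightarrow> i (s.join x y) = t.join (i x) (i y)"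
  using i_lub[of "{x,y}"] by simp
lemma i_mono: "x \<in> S \<Longrightarrow> y \<in> S \<Longrightarrow> le x y \<Longrightarrow> le' (i x) (i y)"
  by (metis i_meet s.meet_eq t.meet_l2 i_S)
lemma i_compl: "u \<in> S \<Longrightarrow> u' \<in> S \<Longrightarrow> s.join u u' = s.tp \<Longrightarrow> s.meet u u' = s.bt \<Longrightarrow>
   t.join (i u) (i u') = t.tp \<and> t.meet (i u) (i u') = t.bt"
  by (metis i_join i_meet i_top i_bot)

abbreviation "p \<equiv> pr S le le' i"

lemma pi_least:
  assumes c: "c \<in> S'"
  shows "p c \<in> S \<and> le' c (i (p c)) \<and> (\<forall>x\<in>S. le' c (i x) \<longrightarrow> le (p c) x)"
proof -
  define Z where "Z = {z\<in>S. t.meet c (i z) = t.bt}"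
  define m where "m = lub_in le S Z"
  have ZS: "Z \<subseteq> S" unfolding Z_def by auto
  have mS: "m \<in> S" unfolding m_def using s.lub_S ZS .
  have "t.meet c (lub_in le' S' (i ` Z)) = t.bt"
    by (rule t.Zlem[OF c]) (auto simp: Z_def intro: i_S)
  then have cm: "t.meet c (i m) = t.bt" unfolding m_def using i_lub ZS by simp
  obtain m' where m': "m' \<in> S" "s.join m m' = s.tp" "s.meet m m' = s.bt" using s.compl mS by blast
  have m'c: "s.join m' m = s.tp" "s.meet m' m = s.bt" using m' s.compl_sym by blast+
  have im: "t.join (i m') (i m) = t.tp" "t.meet (i m') (i m) = t.bt" using i_compl m'c m' mS by blast+
  have c1: "le' c (i m')" using t.L1[OF i_S[OF m'(1)] i_S[OF mS] im c] cm by simp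
  have c2: "le m' x" if x: "x \<in> S" "le' c (i x)" for x
  proof -
    obtain x' where x': "x' \<in> S" "s.join x x' = s.tp" "s.meet x x' = s.bt" using s.compl x(1) by blast
    have ix: "t.join (i x) (i x') = t.tp" "t.meet (i x) (i x') = t.bt" using i_compl x' x by blast+
    have "t.meet c (i x') = t.bt" using t.L1[OF i_S[OF x(1)] i_S[OF x'(1)] ix c] x by simp
    then have "x' \<in> Z" unfolding Z_def using x' by simp
    then have "le x' m" unfolding m_def using s.lub_upper ZS by blast
    then have "le (s.meet x' m') (s.meet m m')" using s.meet_mono x' mS m' by blast
    then have "le (s.meet m' x') s.bt" using m' s.meet_comm by metis
    then have "s.meet m' x' = s.bt" using s.is_bot s.meet_S m' x' by blast
    then show ?thesis using s.L1[OF x(1) x'(1) x'(2,3) m'(1)] by simp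
  qed
  have "is_glb le S {x\<in>S. le' c (i x)} m'"
    unfolding is_glb_def using m'(1) c1 c2 by blast
  then have "p c = m'" unfolding pr_def by (rule s.glb_eq)
  then show ?thesis using m'(1) c1 c2 by simp
qed

lemma p_S: "c \<in> S' \<Longrightarrow> p c \<in> S" using pi_least by blast
lemma p_unit: "c \<in> S' \<Longrightarrow> le' c (i (p c))" using pi_least by blast
lemma p_least: "c \<in> S' \<Longrightarrow> x \<in> S \<Longrightarrow> le' c (i x) \<Longrightarrow> le (p c) x" using pi_least by blast

lemma p_char: "c \<in> S' \<Longrightarrow> q \<in> S \<Longrightarrow> le' c (i q) \<Longrightarrow> (\<And>x. x \<in> S \<Longrightarrow> le' c (i x) \<Longrightarrow> le q x) \<Longrightarrow> p c = q"
  by (meson p_S p_least p_unit s.antisym)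

lemma p_mono: "c \<in> S' \<Longrightarrow> d \<in> S' \<Longrightarrow> le' c d \<Longrightarrow> le (p c) (p d)"
  by (meson i_S p_S p_least p_unit t.trans)

lemma p_i: "d \<in> S \<Longrightarrow> le (p (i d)) d"
  by (simp add: i_S p_least t.refl)

lemma p_bot: "p t.bt = s.bt"
  by (meson i_S p_S p_least s.bot_S s.is_bot t.bot_S t.bot_le)

lemma frob:
  assumes x: "x \<in> S'" and d: "d \<in> S"
  shows "p (t.meet x (i d)) = s.meet (p x) d"
proof -
  let ?q = "p (t.meet x (i d))"
  have xd: "t.meet x (i d) \<in> S'" using t.meet_S x i_S d by blast
  have qS: "?q \<in> S" using p_S xd .
  have pxS: "p x \<in> S" using p_S x .
  have A: "le ?q (s.meet (p x) d)"
  proof (rule s.meet_gr[OF pxS d qS])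
    show "le ?q (p x)" using p_mono xd x t.meet_l1 i_S d by blast
    have "le ?q (p (i d))" using p_mono xd i_S d t.meet_l2 x by blast
    then show "le ?q d" using p_i d s.trans qS p_S i_S by blast
  qed
  obtain d' where d': "d' \<in> S" "s.join d d' = s.tp" "s.meet d d' = s.bt" using s.compl d by blast
  have id: "t.join (i d) (i d') = t.tp" "t.meet (i d) (i d') = t.bt" using i_compl d d' by blast+
  have jS: "s.join ?q d' \<in> S" using s.join_S qS d' by blast
  have "x = t.meet x t.tp" using t.meet_eq t.le_top x t.top_S by simp
  also have "\<dots> = t.join (t.meet x (i d)) (t.meet x (i d'))" using t.distrib[OF x i_S[OF d] i_S[OF d'(1)]] unfolding id(1) .
  finally have xe: "x = t.join (t.meet x (i d)) (t.meet x (i d'))" .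
  have "le' x (t.join (i ?q) (i d'))"
  proof -
    have "le' (t.join (t.meet x (i d)) (t.meet x (i d'))) (t.join (i ?q) (i d'))"
    proof (rule t.join_le)
      show "le' (t.meet x (i d)) (t.join (i ?q) (i d'))"
        using t.trans[OF xd i_S[OF qS] t.join_S[OF i_S[OF qS] i_S[OF d'(1)]] p_unit[OF xd]
           t.join_u1[OF i_S[OF qS] i_S[OF d'(1)]]] .
      show "le' (t.meet x (i d')) (t.join (i ?q) (i d'))"
        using t.trans[OF t.meet_S[OF x i_S[OF d'(1)]] i_S[OF d'(1)] t.join_S[OF i_S[OF qS] i_S[OF d'(1)]]
          t.meet_l2[OF x i_S[OF d'(1)]] t.join_u2[OF i_S[OF qS] i_S[OF d'(1)]]] .
    qed (use t.meet_S x i_S d d' t.join_S qS in auto)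
    then show ?thesis using xe by simp
  qed
  then have "le' x (i (s.join ?q d'))" using i_join qS d' by simp
  then have px: "le (p x) (s.join ?q d')" using p_least x jS by blast
  have "le (s.meet (p x) d) (s.meet (s.join ?q d') d)" using s.meet_mono px pxS jS d by blast
  moreover have "s.meet (s.join ?q d') d = s.join (s.meet d ?q) s.bt"
    using s.distrib[OF d qS d'(1)] d' s.meet_comm by metis
  moreover have "le (s.join (s.meet d ?q) s.bt) ?q"
    using s.join_le s.meet_S s.bot_S s.meet_l2 s.bot_le d qS by simp
  ultimately have B: "le (s.meet (p x) d) ?q"
    using s.trans s.meet_S pxS d s.join_S jS qS s.bot_S by metis
  show ?thesis using A B s.antisym qS s.meet_S pxS d by blast
qed

end

lemma pr_comp:
  assumes E1: "EMB S1 le1 S2 le2 i" and E2: "EMB S2 le2 S3 le3 j" and E3: "EMB S1 le1 S3 le3 k"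
    and c: "\<And>x. x \<in> S1 \<Longrightarrow> j (i x) = k x" and cS: "y \<in> S3"
  shows "pr S1 le1 le2 i (pr S2 le2 le3 j y) = pr S1 le1 le3 k y"
proof -
  interpret E1: EMB S1 le1 S2 le2 i by fact
  interpret E2: EMB S2 le2 S3 le3 j by fact
  interpret E3: EMB S1 le1 S3 le3 k by fact
  let ?q = "E1.p (E2.p y)"
  have yS: "E2.p y \<in> S2" using E2.p_S cS .
  have qS: "?q \<in> S1" using E1.p_S yS .
  show ?thesis
  proof (rule sym, rule E3.p_char[OF cS qS])
    have "le2 (E2.p y) (i ?q)" using E1.p_unit yS .
    then have "le3 (j (E2.p y)) (j (i ?q))" using E2.i_mono yS E1.i_S qS by blast
    then show "le3 y (k ?q)" using E2.p_unit[OF cS] c qS E2.t.trans cS E2.i_S yS E1.i_S by metis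
  next
    fix x assume x: "x \<in> S1" "le3 y (k x)"
    then have "le3 y (j (i x))" using c by simp
    then have "le2 (E2.p y) (i x)" using E2.p_least cS E1.i_S x by blast
    then show "le1 ?q x" using E1.p_least yS x by blast
  qed
qed


locale CIS =
  fixes B :: "'i::wellorder \<Rightarrow> 'b set" and le :: "'i \<Rightarrow> 'b \<Rightarrow> 'b \<Rightarrow> bool"
    and e :: "'i \<Rightarrow> 'i \<Rightarrow> 'b \<Rightarrow> 'b"
  assumes cis: "complete_iteration_system B le e"
begin

abbreviation "mt a x y \<equiv> glb_in (le a) (B a) {x, y}"
abbreviation "bb a \<equiv> lub_in (le a) (B a) {}"
abbreviation "pp a b \<equiv> pr (B a) (le a) (le b) (e a b)"

lemma cb: "CBA (B a) (le a)"
  using cis unfolding complete_iteration_system_def CBA_def by blast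
lemma em: "a \<le> b \<Longrightarrow> EMB (B a) (le a) (B b) (le b) (e a b)"
  using cis cb unfolding complete_iteration_system_def EMB_def EMB_axioms_def by blast
lemma e_id: "x \<in> B a \<Longrightarrow> e a a x = x"
  using cis unfolding complete_iteration_system_def by blast
lemma e_comp: "a \<le> b \<Longrightarrow> b \<le> c \<Longrightarrow> x \<in> B a \<Longrightarrow> e b c (e a b x) = e a c x"
  using cis unfolding complete_iteration_system_def by blast
lemma ret: "retraction B le e a b = pp a b"
  unfolding retraction_def pr_def by (rule ext) simp
lemma th_S: "f \<in> threads B le e \<Longrightarrow> f a \<in> B a"
  unfolding threads_def by blast
lemma th_p: "f \<in> threads B le e \<Longrightarrow> a \<le> b \<Longrightarrow> pp a b (f b) = f a"
  unfolding threads_def ret by blast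
lemma th_I: "(\<And>a. f a \<in> B a) \<Longrightarrow> (\<And>a b. a \<le> b \<Longrightarrow> pp a b (f b) = f a) \<Longrightarrow> f \<in> threads B le e"
  unfolding threads_def ret by blast

lemma pp_comp: "a \<le> b \<Longrightarrow> b \<le> c \<Longrightarrow> y \<in> B c \<Longrightarrow> pp a b (pp b c y) = pp a c y"
  by (rule pr_comp[OF em em em]) (auto intro: e_comp order_trans)

lemma core:
  assumes AT: "A \<subseteq> threads B le e"
    and inc: "\<forall>f\<in>A. \<forall>g\<in>A. f \<noteq> g \<longrightarrow> ba_incompatible B le \<alpha> (f \<alpha>) (g \<alpha>)"
    and s: "s \<in> threads B le e" "s \<noteq> zero_thread B le"
    and sle: "\<And>b. le b (s b) (pointwise_sup B le A b)"
  shows "\<exists>f\<in>A. \<exists>t\<in>threads B le e. t \<noteq> zero_thread B le \<and> thread_le le t s \<and> thread_le le t f"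
proof -
  have sS: "\<And>b. s b \<in> B b" using th_S s by blast
  have WS: "\<And>b. (\<lambda>f. f b) ` A \<subseteq> B b" using th_S AT by blast
  have fS: "\<And>f b. f \<in> A \<Longrightarrow> f b \<in> B b" using th_S AT by blast
  have fp: "\<And>f a b. f \<in> A \<Longrightarrow> a \<le> b \<Longrightarrow> pp a b (f b) = f a" using th_p AT by blast
  have s1: "s \<alpha> \<noteq> bb \<alpha>"
  proof
    assume h: "s \<alpha> = bb \<alpha>"
    obtain b where b: "s b \<noteq> bb b"
      using s(2) unfolding zero_thread_def bot_of_def by auto
    show False
    proof (cases "b \<le> \<alpha>")
      case True
      interpret E: EMB "B b" "le b" "B \<alpha>" "le \<alpha>" "e b \<alpha>" using em True .
      have "s b = pp b \<alpha> (s \<alpha>)" using th_p s True by simp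
      then show False using b h E.p_bot by simp
    next
      case False
      then have ab: "\<alpha> \<le> b" by simp
      interpret E: EMB "B \<alpha>" "le \<alpha>" "B b" "le b" "e \<alpha> b" using em ab .
      have "le b (s b) (e \<alpha> b (pp \<alpha> b (s b)))" using E.p_unit sS .
      then have "le b (s b) (bb b)" using th_p[OF s(1) ab] h E.i_bot by simp
      then show False using b E.t.is_bot sS by blast
    qed
  qed
  interpret Ca: CBA "B \<alpha>" "le \<alpha>" by (rule cb)
  obtain f where fA: "f \<in> A" and c0: "mt \<alpha> (s \<alpha>) (f \<alpha>) \<noteq> bb \<alpha>"
  proof -
    have "\<exists>f\<in>A. mt \<alpha> (s \<alpha>) (f \<alpha>) \<noteq> bb \<alpha>"
    proof (rule ccontr)
      assume "\<not> ?thesis"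
      then have "mt \<alpha> (s \<alpha>) (pointwise_sup B le A \<alpha>) = bb \<alpha>"
        unfolding pointwise_sup_def using Ca.Zlem[OF sS WS] by blast
      moreover have "mt \<alpha> (s \<alpha>) (pointwise_sup B le A \<alpha>) = s \<alpha>"
        using Ca.meet_eq sS sle Ca.lub_S WS unfolding pointwise_sup_def by blast
      ultimately show False using s1 by simp
    qed
    then show ?thesis using that by blast
  qed
  define c where "c = mt \<alpha> (s \<alpha>) (f \<alpha>)"
  have cS: "c \<in> B \<alpha>" unfolding c_def using Ca.meet_S sS fS fA by blast
  define t where "t = (\<lambda>b. if \<alpha> \<le> b then mt b (s b) (e \<alpha> b (f \<alpha>)) else pp b \<alpha> c)"
  have ta: "t \<alpha> = c" unfolding t_def c_def using e_id fS fA by simp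
  have tS: "\<And>b. t b \<in> B b"
  proof -
    fix b show "t b \<in> B b"
    proof (cases "\<alpha> \<le> b")
      case True
      interpret E: EMB "B \<alpha>" "le \<alpha>" "B b" "le b" "e \<alpha> b" using em True .
      show ?thesis using True E.t.meet_S sS E.i_S fS fA unfolding t_def by simp
    next
      case False
      interpret E: EMB "B b" "le b" "B \<alpha>" "le \<alpha>" "e b \<alpha>" using em False by simp
      show ?thesis using False E.p_S cS unfolding t_def by simp
    qed
  qed
  have case1: "pp b d (t d) = t b" if bd: "\<alpha> \<le> b" "b \<le> d" for b d
  proof -
    interpret E: EMB "B b" "le b" "B d" "le d" "e b d" using em bd(2) .
    interpret E2: EMB "B \<alpha>" "le \<alpha>" "B b" "le b" "e \<alpha> b" using em bd(1) .
    have ad: "\<alpha> \<le> d" using bd by simp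
    have "t d = mt d (s d) (e b d (e \<alpha> b (f \<alpha>)))"
      unfolding t_def using ad e_comp[OF bd] fS fA by simp
    then have "pp b d (t d) = mt b (pp b d (s d)) (e \<alpha> b (f \<alpha>))"
      using E.frob sS E2.i_S fS fA by simp
    then show ?thesis unfolding t_def using bd th_p[OF s(1) bd(2)] by simp
  qed
  have tT: "t \<in> threads B le e"
  proof (rule th_I[OF tS])
    fix b d :: 'i assume bd: "b \<le> d"
    show "pp b d (t d) = t b"
    proof (cases "\<alpha> \<le> b")
      case True then show ?thesis using case1 bd by blast
    next
      case nb: False
      show ?thesis
      proof (cases "\<alpha> \<le> d")
        case True
        have "pp b d (t d) = pp b \<alpha> (pp \<alpha> d (t d))"
          using pp_comp[of b \<alpha> d] nb True tS by simp
        also have "\<dots> = pp b \<alpha> c" using case1[of \<alpha> d] True ta by simp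
        finally show ?thesis using nb unfolding t_def by simp
      next
        case False
        then have "t d = pp d \<alpha> c" unfolding t_def by simp
        then have "pp b d (t d) = pp b \<alpha> c" using pp_comp[of b d \<alpha>] bd False cS by simp
        then show ?thesis using nb unfolding t_def by simp
      qed
    qed
  qed
  have tz: "t \<noteq> zero_thread B le"
  proof
    assume "t = zero_thread B le"
    then have "t \<alpha> = bb \<alpha>" unfolding zero_thread_def bot_of_def by simp
    then show False using ta c0 c_def by simp
  qed
  have ts: "thread_le le t s"
    unfolding thread_le_def
  proof
    fix b show "le b (t b) (s b)"
    proof (cases "\<alpha> \<le> b")
      case True
      interpret E: EMB "B \<alpha>" "le \<alpha>" "B b" "le b" "e \<alpha> b" using em True .
      show ?thesis using True E.t.meet_l1 sS E.i_S fS fA unfolding t_def by simp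
    next
      case False
      interpret E: EMB "B b" "le b" "B \<alpha>" "le \<alpha>" "e b \<alpha>" using em False by simp
      have "le \<alpha> c (s \<alpha>)" unfolding c_def using Ca.meet_l1 sS fS fA by blast
      then have "le b (pp b \<alpha> c) (pp b \<alpha> (s \<alpha>))" using E.p_mono cS sS by blast
      then show ?thesis using False th_p[OF s(1)] unfolding t_def by simp
    qed
  qed
  have tf: "thread_le le t f"
    unfolding thread_le_def
  proof
    fix b show "le b (t b) (f b)"
    proof (cases "\<alpha> \<le> b")
      case True
      interpret E: EMB "B \<alpha>" "le \<alpha>" "B b" "le b" "e \<alpha> b" using em True .
      let ?u = "e \<alpha> b (f \<alpha>)"
      have uS: "?u \<in> B b" using E.i_S fS fA by blast
      have fbS: "f b \<in> B b" using fS fA by blast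
      obtain w where w: "w \<in> B b" "mt b (f b) w = bb b" "lub_in (le b) (B b) {f b, w} = lub_in (le b) (B b) (B b)"
        using E.t.compl fbS by blast
      let ?x = "mt b (s b) ?u"
      have xS: "?x \<in> B b" using E.t.meet_S sS uS by blast
      let ?y = "mt b ?u w"
      have yS: "?y \<in> B b" using E.t.meet_S uS w by blast
      have yg: "mt b ?y (g b) = bb b" if gA: "g \<in> A" for g
      proof (cases "g = f")
        case True
        have "le b (mt b ?y (g b)) (mt b w (f b))"
          using E.t.meet_mono[OF yS w(1) fbS] E.t.meet_l2 uS w True by blast
        moreover have "mt b w (f b) = bb b" using w(2) by (simp add: insert_commute)
        ultimately have "le b (mt b ?y (g b)) (bb b)" by simp
        then show ?thesis using E.t.is_bot[OF E.t.meet_S[OF yS]] fbS True by blast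
      next
        case False
        have gbS: "g b \<in> B b" using fS gA by blast
        have gaS: "g \<alpha> \<in> B \<alpha>" using fS gA by blast
        have faS: "f \<alpha> \<in> B \<alpha>" using fS fA by blast
        have "le b (g b) (e \<alpha> b (g \<alpha>))" using E.p_unit[OF gbS] fp[OF gA True] by simp
        then have "le b (mt b (g b) ?y) (mt b (e \<alpha> b (g \<alpha>)) ?u)"
        proof -
          assume h: "le b (g b) (e \<alpha> b (g \<alpha>))"
          have mS: "mt b (g b) ?y \<in> B b" using E.t.meet_S gbS yS by blast
          have egS: "e \<alpha> b (g \<alpha>) \<in> B b" using E.i_S gaS by blast
          have 1: "le b (mt b (g b) ?y) (e \<alpha> b (g \<alpha>))"
            using E.t.trans[OF mS gbS egS E.t.meet_l1[OF gbS yS] h] .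
          have 2: "le b (mt b (g b) ?y) ?u"
            using E.t.trans[OF mS yS uS E.t.meet_l2[OF gbS yS] E.t.meet_l1[OF uS w(1)]] .
          show ?thesis using E.t.meet_gr[OF egS uS mS 1 2] .
        qed
        moreover have "mt b (e \<alpha> b (g \<alpha>)) ?u = e \<alpha> b (mt \<alpha> (g \<alpha>) (f \<alpha>))"
          using E.i_meet gaS faS by simp
        moreover have "mt \<alpha> (g \<alpha>) (f \<alpha>) = bb \<alpha>"
        proof -
          have "f \<noteq> g" using False by simp
          then have "ba_incompatible B le \<alpha> (f \<alpha>) (g \<alpha>)" using inc fA gA by blast
          then show ?thesis unfolding ba_incompatible_def bot_of_def
            using Ca.meet_S Ca.meet_l1 Ca.meet_l2 gaS faS by blast
        qed
        ultimately have "le b (mt b (g b) ?y) (bb b)" using E.i_bot by simp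
        then have "le b (mt b ?y (g b)) (bb b)" by (simp add: insert_commute)
        then show ?thesis using E.t.is_bot[OF E.t.meet_S[OF yS gbS]] by blast
      qed
      have "mt b ?y (pointwise_sup B le A b) = bb b"
        unfolding pointwise_sup_def using E.t.Zlem[OF yS WS] yg by blast
      moreover have "le b (mt b ?x w) (mt b ?y (pointwise_sup B le A b))"
      proof -
        have PS: "pointwise_sup B le A b \<in> B b" unfolding pointwise_sup_def using E.t.lub_S WS by blast
        have xw: "mt b ?x w \<in> B b" using E.t.meet_S xS w by blast
        have "le b (mt b ?x w) ?u" using E.t.trans[OF xw xS uS] E.t.meet_l1 E.t.meet_l2 xS w sS uS by blast
        moreover have "le b (mt b ?x w) w" using E.t.meet_l2 xS w by blast
        ultimately have 1: "le b (mt b ?x w) ?y" using E.t.meet_gr uS w xw by blast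
        have "le b (mt b ?x w) (s b)" using E.t.trans[OF xw xS sS] E.t.meet_l1 xS w sS uS by blast
        then have 2: "le b (mt b ?x w) (pointwise_sup B le A b)" using E.t.trans[OF xw sS PS] sle by blast
        show ?thesis using E.t.meet_gr[OF yS PS xw 1 2] .
      qed
      ultimately have "le b (mt b ?x w) (bb b)" by simp
      then have "mt b ?x w = bb b" using E.t.is_bot[OF E.t.meet_S[OF xS w(1)]] by blast
      moreover have "lub_in (le b) (B b) {f b, w} = lub_in (le b) (B b) (B b)" using w by simp
      ultimately have "le b ?x (f b)" using E.t.L1[OF fbS w(1) _ w(2) xS] by simp
      then show ?thesis using True unfolding t_def by simp
    next
      case False
      interpret E: EMB "B b" "le b" "B \<alpha>" "le \<alpha>" "e b \<alpha>" using em False by simp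
      have "le \<alpha> c (f \<alpha>)" unfolding c_def using Ca.meet_l2 sS fS fA by blast
      then have "le b (pp b \<alpha> c) (pp b \<alpha> (f \<alpha>))" using E.p_mono cS fS fA by blast
      then show ?thesis using False fp[OF fA] unfolding t_def by simp
    qed
  qed
  show ?thesis using fA tT tz ts tf by blast
qed

end


lemma ro_emb_open:
  assumes rf: "\<And>p. p \<in> P \<Longrightarrow> r p p"
    and tr: "\<And>x y z. x \<in> P \<Longrightarrow> y \<in> P \<Longrightarrow> z \<in> P \<Longrightarrow> r x y \<Longrightarrow> r y z \<Longrightarrow> r x z"
  shows "regular_open P r (ro_emb P r x)"
  unfolding regular_open_def
proof (intro conjI ballI impI)
  show "ro_emb P r x \<subseteq> P" unfolding ro_emb_def by blast
next
  fix p q assume "p \<in> ro_emb P r x" "q \<in> P" "r q p"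
  then show "q \<in> ro_emb P r x" unfolding ro_emb_def using tr by blast
next
  fix p assume p: "p \<in> P" and h: "\<forall>q\<in>P. r q p \<longrightarrow> (\<exists>s\<in>ro_emb P r x. r s q)"
  show "p \<in> ro_emb P r x" unfolding ro_emb_def
  proof (intro CollectI conjI ballI impI p)
    fix q' assume q': "q' \<in> P" "r q' p"
    then obtain s where s: "s \<in> ro_emb P r x" "r s q'" using h by blast
    then have "s \<in> P" "compatible P r s x" unfolding ro_emb_def using rf by blast+
    then obtain w where "w \<in> P" "r w s" "r w x" unfolding compatible_def by blast
    then show "compatible P r q' x" unfolding compatible_def using tr s q' \<open>s \<in> P\<close> by blast
  qed
qed

theorem lemma3p8:
  fixes B :: "'i::wellorder \<Rightarrow> 'b set"
    and le :: "'i \<Rightarrow> 'b \<Rightarrow> 'b \<Rightarrow> bool"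
    and e :: "'i \<Rightarrow> 'i \<Rightarrow> 'b \<Rightarrow> 'b"
    and A :: "('i \<Rightarrow> 'b) set"
  assumes "complete_iteration_system B le e"
    and "antichain (thread_poset B le e) (thread_le le) A"
    and "\<exists>a. inj_on (\<lambda>f. f a) A \<and>
           (\<forall>f\<in>A. \<forall>g\<in>A. f \<noteq> g \<longrightarrow> ba_incompatible B le a (f a) (g a))"
  shows "is_lub (\<subseteq>) (RO (thread_poset B le e) (thread_le le))
           (ro_emb (thread_poset B le e) (thread_le le) ` A)
           (ro_emb (thread_poset B le e) (thread_le le) (pointwise_sup B le A))"
proof -
  interpret C: CIS B le e by (rule CIS.intro) fact
  obtain \<alpha> where inc: "\<forall>f\<in>A. \<forall>g\<in>A. f \<noteq> g \<longrightarrow> ba_incompatible B le \<alpha> (f \<alpha>) (g \<alpha>)"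
    using assms(3) by blast
  let ?P = "thread_poset B le e" and ?r = "thread_le le"
  let ?g = "pointwise_sup B le A"
  have AP: "A \<subseteq> ?P" using assms(2) unfolding antichain_def by blast
  have PT: "?P \<subseteq> threads B le e" unfolding thread_poset_def by blast
  have AT: "A \<subseteq> threads B le e" using AP PT by blast
  have WS: "\<And>b. (\<lambda>f. f b) ` A \<subseteq> B b" using C.th_S AT by blast
  have gS: "\<And>b. ?g b \<in> B b" unfolding pointwise_sup_def using CBA.lub_S[OF C.cb WS] .
  have rf: "\<And>p. p \<in> ?P \<Longrightarrow> ?r p p"
    unfolding thread_le_def using CBA.refl[OF C.cb] C.th_S PT by blast
  have trg: "?r x z" if "\<And>b. x b \<in> B b" "\<And>b. y b \<in> B b" "\<And>b. z b \<in> B b" "?r x y" "?r y z" for x y z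
    using that CBA.trans[OF C.cb] unfolding thread_le_def by blast
  have tr: "\<And>x y z. x \<in> ?P \<Longrightarrow> y \<in> ?P \<Longrightarrow> z \<in> ?P \<Longrightarrow> ?r x y \<Longrightarrow> ?r y z \<Longrightarrow> ?r x z"
    using trg C.th_S PT by (meson subsetD)
  have RO: "ro_emb ?P ?r x \<in> RO ?P ?r" for x
  proof -
    have "regular_open ?P ?r (ro_emb ?P ?r x)"
      apply (rule ro_emb_open[where P = "?P" and r = "?r" and x = x])
      subgoal by (rule rf)
      subgoal by (rule tr) assumption+
      done
    then show ?thesis unfolding RO_def by simp
  qed
  have fg: "?r f ?g" if "f \<in> A" for f
    unfolding thread_le_def pointwise_sup_def using CBA.lub_upper[OF C.cb WS] that by blast
  show ?thesis unfolding is_lub_def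
  proof (intro conjI ballI impI RO)
    fix y assume "y \<in> ro_emb ?P ?r ` A"
    then obtain f where f: "f \<in> A" "y = ro_emb ?P ?r f" by blast
    show "y \<subseteq> ro_emb ?P ?r ?g"
    proof
      fix q assume "q \<in> y"
      then have q: "q \<in> ?P" "\<forall>q'\<in>?P. ?r q' q \<longrightarrow> compatible ?P ?r q' f"
        unfolding f ro_emb_def by blast+
      show "q \<in> ro_emb ?P ?r ?g" unfolding ro_emb_def
      proof (intro CollectI conjI ballI impI q(1))
        fix q' assume "q' \<in> ?P" "?r q' q"
        then obtain w where w: "w \<in> ?P" "?r w q'" "?r w f" using q(2) unfolding compatible_def by blast
        have "?r w ?g" using trg[OF _ _ gS w(3) fg[OF f(1)]] C.th_S w(1) f(1) AT PT by blast
        then show "compatible ?P ?r q' ?g" unfolding compatible_def using w by blast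
      qed
    qed
  next
    fix U assume U: "U \<in> RO ?P ?r" "\<forall>y\<in>ro_emb ?P ?r ` A. y \<subseteq> U"
    have Ur: "regular_open ?P ?r U" using U(1) unfolding RO_def by blast
    show "ro_emb ?P ?r ?g \<subseteq> U"
    proof
      fix p assume p: "p \<in> ro_emb ?P ?r ?g"
      then have pP: "p \<in> ?P" unfolding ro_emb_def by blast
      have "\<exists>s\<in>U. ?r s q" if q: "q \<in> ?P" "?r q p" for q
      proof -
        have "compatible ?P ?r q ?g" using p q unfolding ro_emb_def by blast
        then obtain s where s: "s \<in> ?P" "?r s q" "?r s ?g" unfolding compatible_def by blast
        have sT: "s \<in> threads B le e" "s \<noteq> zero_thread B le" using s(1) unfolding thread_poset_def by blast+
        obtain f t where f: "f \<in> A" and t: "t \<in> threads B le e" "t \<noteq> zero_thread B le"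
            "?r t s" "?r t f"
          using C.core[OF AT inc sT] s(3) unfolding thread_le_def by blast
        have tP: "t \<in> ?P" using t unfolding thread_poset_def by blast
        have "t \<in> ro_emb ?P ?r f" unfolding ro_emb_def
        proof (intro CollectI conjI ballI impI tP)
          fix t' assume "t' \<in> ?P" "?r t' t"
          moreover have "?r t' f" using tr[OF \<open>t' \<in> ?P\<close> tP] AP f t(4) \<open>?r t' t\<close> by blast
          ultimately show "compatible ?P ?r t' f" unfolding compatible_def using rf by blast
        qed
        then have "t \<in> U" using U(2) f by blast
        moreover have "?r t q" using tr tP s(1) q(1) t(3) s(2) by blast
        ultimately show ?thesis by blast
      qed
      then show "p \<in> U" using Ur pP unfolding regular_open_def by blast
    qed
  qed
qed

end
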